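(* Let $(A,B)$ be a finite-dimensional odd-symmetric associative superalgebra over an algebraically closed field $\mathbb{K}$ of characteristic zero which is $B$-irreducible and non-simple, and such that $A_{\bar 0}$ is a semi-simple associative algebra. Then $A$ is isomorphic to the semi-direct product $S\oplus P(S^* )$ of a simple associative algebra $S$ by $P(S^* )$ by means of $(L^*,R^* )$.
   Context: A superalgebra is $\mathbb{Z}_2$-graded, $A=A_{\bar 0}\oplus A_{\bar 1}$, $A_\alpha A_\beta\subseteq A_{\alpha+\beta}$. An odd-symmetric structure on $A$ is a bilinear form $B$ with $B(A_{\bar 0},A_{\bar 0})=B(A_{\bar 1},A_{\bar 1})=0$ which is supersymmetric ($B(x,y)=(-1)^{|x||y|}B(y,x)$), associative ($B(xy,z)=B(x,yz)$) and non-degenerate. $(A,B)$ is $B$-irreducible if its only graded two-sided ideals $I$ with $B|_{I\times I}$ non-degenerate are $\{0\}$ and $A$. A superalgebra is simple if its product is non-zero and it has no graded two-sided ideals other than $\{0\}$ and itself. Semi-direct product: for an associative algebra $S$ (viewed as purely even), let $P(S^* )$ be the $\mathbb{Z}_2$-graded space with zero even part and odd part $S^*$. On $S\oplus P(S^* )$ define $(x+f)\star(y+h)=xy+L^*(x)(h)+R^*(y)(f)$ for $x,y\in S$, $f,h\in S^*$, where $L^*(x)(h)=h\circ R_x$ and $R^*(y)(f)=f\circ L_y$ ($L_x,R_x$ the left and right multiplications by $x$ in $S$), together with the odd form $B(f,x)=B(x,f)=f(x)$, $B(S,S)=0=B(S^*,S^* )$; this is an odd-symmetric associative superalgebra. 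*)

theory Defs
  imports Main "HOL-Computational_Algebra.Polynomial"
begin

definition alg_closed :: "'k::field itself \<Rightarrow> bool" where
  "alg_closed _ \<longleftrightarrow> (\<forall>p :: 'k poly. degree p \<noteq> 0 \<longrightarrow> (\<exists>x. poly p x = 0))"

definition fin_dim_vs :: "('k::field \<Rightarrow> 'v::ab_group_add \<Rightarrow> 'v) \<Rightarrow> bool" where
  "fin_dim_vs scale \<longleftrightarrow> vector_space scale \<and>
     (\<exists>F. finite F \<and> module.span scale F = UNIV)"

definition bilinear_on ::
  "('k::field \<Rightarrow> 'v::ab_group_add \<Rightarrow> 'v) \<Rightarrow> 'v set \<Rightarrow> ('v \<Rightarrow> 'v \<Rightarrow> 'v) \<Rightarrow> bool" where
  "bilinear_on scale S m \<longleftrightarrow>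
     (\<forall>x\<in>S. \<forall>y\<in>S. \<forall>z\<in>S. m (x + y) z = m x z + m y z \<and> m z (x + y) = m z x + m z y) \<and>
     (\<forall>c. \<forall>x\<in>S. \<forall>y\<in>S. m (scale c x) y = scale c (m x y) \<and> m x (scale c y) = scale c (m x y))"

definition assoc_superalgebra ::
  "('k::field \<Rightarrow> 'v::ab_group_add \<Rightarrow> 'v) \<Rightarrow> ('v \<Rightarrow> 'v \<Rightarrow> 'v) \<Rightarrow> 'v set \<Rightarrow> 'v set \<Rightarrow> bool" where
  "assoc_superalgebra scale mul A0 A1 \<longleftrightarrow>
     fin_dim_vs scale \<and>
     module.subspace scale A0 \<and> module.subspace scale A1 \<and>
     A0 \<inter> A1 = {0} \<and> (\<forall>v. \<exists>x\<in>A0. \<exists>y\<in>A1. v = x + y) \<and>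
     bilinear_on scale UNIV mul \<and>
     (\<forall>x y z. mul (mul x y) z = mul x (mul y z)) \<and>
     (\<forall>x\<in>A0. \<forall>y\<in>A0. mul x y \<in> A0) \<and> (\<forall>x\<in>A0. \<forall>y\<in>A1. mul x y \<in> A1) \<and>
     (\<forall>x\<in>A1. \<forall>y\<in>A0. mul x y \<in> A1) \<and> (\<forall>x\<in>A1. \<forall>y\<in>A1. mul x y \<in> A0)"

definition odd_symmetric_form ::
  "('k::field \<Rightarrow> 'v::ab_group_add \<Rightarrow> 'v) \<Rightarrow> ('v \<Rightarrow> 'v \<Rightarrow> 'v) \<Rightarrow> 'v set \<Rightarrow> 'v set
     \<Rightarrow> ('v \<Rightarrow> 'v \<Rightarrow> 'k) \<Rightarrow> bool" where
  "odd_symmetric_form scale mul A0 A1 B \<longleftrightarrow>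
     (\<forall>x y z. B (x + y) z = B x z + B y z \<and> B z (x + y) = B z x + B z y) \<and>
     (\<forall>c x y. B (scale c x) y = c * B x y \<and> B x (scale c y) = c * B x y) \<and>
     (\<forall>x\<in>A0. \<forall>y\<in>A0. B x y = 0) \<and> (\<forall>x\<in>A1. \<forall>y\<in>A1. B x y = 0) \<and>
     (\<forall>x\<in>A0. \<forall>y\<in>A0. B x y = B y x) \<and> (\<forall>x\<in>A0. \<forall>y\<in>A1. B x y = B y x) \<and>
     (\<forall>x\<in>A1. \<forall>y\<in>A0. B x y = B y x) \<and> (\<forall>x\<in>A1. \<forall>y\<in>A1. B x y = - B y x) \<and>
     (\<forall>x y z. B (mul x y) z = B x (mul y z)) \<and>
     (\<forall>x. (\<forall>y. B x y = 0) \<longrightarrow> x = 0)"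

definition graded_ideal ::
  "('k::field \<Rightarrow> 'v::ab_group_add \<Rightarrow> 'v) \<Rightarrow> ('v \<Rightarrow> 'v \<Rightarrow> 'v) \<Rightarrow> 'v set \<Rightarrow> 'v set \<Rightarrow> 'v set \<Rightarrow> bool" where
  "graded_ideal scale mul A0 A1 I \<longleftrightarrow>
     module.subspace scale I \<and>
     (\<forall>x\<in>I. \<exists>a\<in>I \<inter> A0. \<exists>b\<in>I \<inter> A1. x = a + b) \<and>
     (\<forall>a. \<forall>x\<in>I. mul a x \<in> I \<and> mul x a \<in> I)"

text \<open>B-irreducible (an irreducible object is by convention non-zero).\<close>
definition B_irreducible ::
  "('k::field \<Rightarrow> 'v::ab_group_add \<Rightarrow> 'v) \<Rightarrow> ('v \<Rightarrow> 'v \<Rightarrow> 'v) \<Rightarrow> 'v set \<Rightarrow> 'v set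
     \<Rightarrow> ('v \<Rightarrow> 'v \<Rightarrow> 'k) \<Rightarrow> bool" where
  "B_irreducible scale mul A0 A1 B \<longleftrightarrow>
     (UNIV :: 'v set) \<noteq> {0} \<and>
     (\<forall>I. graded_ideal scale mul A0 A1 I \<and> (\<forall>x\<in>I. (\<forall>y\<in>I. B x y = 0) \<longrightarrow> x = 0)
          \<longrightarrow> I = {0} \<or> I = UNIV)"

definition simple_superalgebra ::
  "('k::field \<Rightarrow> 'v::ab_group_add \<Rightarrow> 'v) \<Rightarrow> ('v \<Rightarrow> 'v \<Rightarrow> 'v) \<Rightarrow> 'v set \<Rightarrow> 'v set \<Rightarrow> bool" where
  "simple_superalgebra scale mul A0 A1 \<longleftrightarrow>
     (\<exists>x y. mul x y \<noteq> 0) \<and>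
     (\<forall>I. graded_ideal scale mul A0 A1 I \<longrightarrow> I = {0} \<or> I = UNIV)"

definition alg_ideal ::
  "('k::field \<Rightarrow> 'v::ab_group_add \<Rightarrow> 'v) \<Rightarrow> 'v set \<Rightarrow> ('v \<Rightarrow> 'v \<Rightarrow> 'v) \<Rightarrow> 'v set \<Rightarrow> bool" where
  "alg_ideal scale S m J \<longleftrightarrow>
     module.subspace scale J \<and> J \<subseteq> S \<and> (\<forall>a\<in>S. \<forall>x\<in>J. m a x \<in> J \<and> m x a \<in> J)"

fun lprod :: "('v \<Rightarrow> 'v \<Rightarrow> 'v) \<Rightarrow> 'v \<Rightarrow> 'v list \<Rightarrow> 'v" where
  "lprod m x [] = x"
| "lprod m x (y # ys) = lprod m (m x y) ys"

definition nilpotent_set :: "('v::zero \<Rightarrow> 'v \<Rightarrow> 'v) \<Rightarrow> 'v set \<Rightarrow> bool" where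
  "nilpotent_set m J \<longleftrightarrow>
     (\<exists>n>0. \<forall>x xs. x \<in> J \<and> set xs \<subseteq> J \<and> Suc (length xs) = n \<longrightarrow> lprod m x xs = 0)"

text \<open>Semisimple (finite-dimensional) associative algebra: no non-zero nilpotent
  two-sided ideal, i.e. zero (Jacobson) radical.\<close>
definition semisimple_alg ::
  "('k::field \<Rightarrow> 'v::ab_group_add \<Rightarrow> 'v) \<Rightarrow> 'v set \<Rightarrow> ('v \<Rightarrow> 'v \<Rightarrow> 'v) \<Rightarrow> bool" where
  "semisimple_alg scale S m \<longleftrightarrow>
     (\<forall>J. alg_ideal scale S m J \<and> nilpotent_set m J \<longrightarrow> J = {0})"

definition simple_assoc_alg ::
  "('k::field \<Rightarrow> 'v::ab_group_add \<Rightarrow> 'v) \<Rightarrow> 'v set \<Rightarrow> ('v \<Rightarrow> 'v \<Rightarrow> 'v) \<Rightarrow> bool" where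
  "simple_assoc_alg scale S m \<longleftrightarrow>
     module.subspace scale S \<and>
     (\<forall>x\<in>S. \<forall>y\<in>S. m x y \<in> S) \<and> bilinear_on scale S m \<and>
     (\<forall>x\<in>S. \<forall>y\<in>S. \<forall>z\<in>S. m (m x y) z = m x (m y z)) \<and>
     (\<exists>x\<in>S. \<exists>y\<in>S. m x y \<noteq> 0) \<and>
     (\<forall>J. alg_ideal scale S m J \<longrightarrow> J = {0} \<or> J = S)"

text \<open>Dual space S^*: linear functionals on S (extended by 0 outside S).\<close>
definition dual_space ::
  "('k::field \<Rightarrow> 'v::ab_group_add \<Rightarrow> 'v) \<Rightarrow> 'v set \<Rightarrow> ('v \<Rightarrow> 'k) set" where
  "dual_space scale S = {f. (\<forall>x\<in>S. \<forall>y\<in>S. f (x + y) = f x + f y) \<and>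
                            (\<forall>c. \<forall>x\<in>S. f (scale c x) = c * f x) \<and>
                            (\<forall>z. z \<notin> S \<longrightarrow> f z = 0)}"

definition sd_add :: "'v::ab_group_add \<times> ('v \<Rightarrow> 'k::field) \<Rightarrow> 'v \<times> ('v \<Rightarrow> 'k) \<Rightarrow> 'v \<times> ('v \<Rightarrow> 'k)" where
  "sd_add p q = (fst p + fst q, \<lambda>z. snd p z + snd q z)"

definition sd_scale :: "('k::field \<Rightarrow> 'v::ab_group_add \<Rightarrow> 'v) \<Rightarrow> 'k \<Rightarrow> 'v \<times> ('v \<Rightarrow> 'k) \<Rightarrow> 'v \<times> ('v \<Rightarrow> 'k)" where
  "sd_scale scale c p = (scale c (fst p), \<lambda>z. c * snd p z)"

text \<open>Product of the semi-direct product S \<oplus> P(S^*) by means of (L^*, R^*):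
  (x + f)(y + h) = xy + L^*(x)(h) + R^*(y)(f), with L^*(x)(h) = h \<circ> R_x and
  R^*(y)(f) = f \<circ> L_y.\<close>
definition sd_mul :: "'v set \<Rightarrow> ('v \<Rightarrow> 'v \<Rightarrow> 'v) \<Rightarrow>
    'v \<times> ('v \<Rightarrow> 'k::field) \<Rightarrow> 'v \<times> ('v \<Rightarrow> 'k) \<Rightarrow> 'v \<times> ('v \<Rightarrow> 'k)" where
  "sd_mul S m p q =
     (m (fst p) (fst q),
      \<lambda>z. if z \<in> S then snd q (m z (fst p)) + snd p (m (fst q) z) else 0)"

end

theory Submission
  imports Defs
begin


locale RA = finite_dimensional_vector_space scale Bas
  for scale :: "'k::field \<Rightarrow> 'v::ab_group_add \<Rightarrow> 'v" and Bas :: "'v set" +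
  fixes m :: "'v \<Rightarrow> 'v \<Rightarrow> 'v" and R :: "'v set"
  assumes madd1: "m (x + y) z = m x z + m y z"
    and madd2: "m z (x + y) = m z x + m z y"
    and msc1: "m (scale c x) y = scale c (m x y)"
    and msc2: "m x (scale c y) = scale c (m x y)"
    and massoc: "m (m x y) z = m x (m y z)"
    and Rsub: "subspace R"
    and Rcl: "x \<in> R \<Longrightarrow> y \<in> R \<Longrightarrow> m x y \<in> R"
    and SZ: "\<And>I. subspace I \<Longrightarrow> I \<subseteq> R \<Longrightarrow> (\<forall>r\<in>R. \<forall>x\<in>I. m r x \<in> I \<and> m x r \<in> I)
               \<Longrightarrow> (\<forall>x\<in>I. \<forall>y\<in>I. m x y = 0) \<Longrightarrow> I \<subseteq> {0}"
begin

lemma m0l[simp]: "m 0 y = 0"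
  using madd1[of 0 0 y] by simp
lemma m0r[simp]: "m y 0 = 0"
  using madd2[of y 0 0] by simp
lemma mneg1: "m (- x) y = - m x y"
  using madd1[of x "-x" y] by (simp add: eq_neg_iff_add_eq_0 add.commute)
lemma mneg2: "m y (- x) = - m y x"
  using madd2[of y x "-x"] by (simp add: eq_neg_iff_add_eq_0 add.commute)
lemma mdiff1: "m (x - y) z = m x z - m y z"
  using madd1[of x "-y" z] mneg1 by simp
lemma mdiff2: "m z (x - y) = m z x - m z y"
  using madd2[of z x "-y"] mneg2 by simp

lemmas msimps = madd1 madd2 msc1 msc2 mdiff1 mdiff2 mneg1 mneg2

definition "lideal L \<longleftrightarrow> subspace L \<and> L \<subseteq> R \<and> (\<forall>r\<in>R. \<forall>x\<in>L. m r x \<in> L)"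

lemma SZL:
  assumes "lideal L" and sq: "\<forall>x\<in>L. \<forall>y\<in>L. m x y = 0"
  shows "L \<subseteq> {0}"
proof -
  have sL: "subspace L" and LR: "L \<subseteq> R" and cl: "\<And>r x. r \<in> R \<Longrightarrow> x \<in> L \<Longrightarrow> m r x \<in> L"
    using assms(1) unfolding lideal_def by auto
  define G where "G = L \<union> {m l y | l y. l \<in> L \<and> y \<in> R}"
  have GR: "G \<subseteq> R" using LR Rcl unfolding G_def by auto
  have sR: "span G \<subseteq> R" using span_minimal[OF GR Rsub] .
  have c1: "m r z \<in> span G \<and> m z r \<in> span G" if r: "r \<in> R" and z: "z \<in> span G" for r z
    using z
  proof (induct rule: span_induct_alt)
    case base then show ?case by (simp add: span_zero)
  next
    case (step c x y)
    have "m r x \<in> G \<and> m x r \<in> G"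
    proof (cases "x \<in> L")
      case True then show ?thesis using cl r unfolding G_def by blast
    next
      case False
      then obtain l y' where "x = m l y'" "l \<in> L" "y' \<in> R" using step(1) unfolding G_def by auto
      then have "m r x = m (m r l) y'" "m x r = m l (m y' r)" "m r l \<in> L" "m y' r \<in> R"
        using cl r Rcl LR by (auto simp: massoc)
      then show ?thesis unfolding G_def using \<open>l \<in> L\<close> \<open>y' \<in> R\<close> by blast
    qed
    then show ?case using step(2)
      by (simp add: msimps span_add span_scale span_base)
  qed
  have gg: "m g g' = 0" if "g \<in> G" "g' \<in> G" for g g'
  proof -
    have lz: "\<And>l l'. l \<in> L \<Longrightarrow> l' \<in> L \<Longrightarrow> m l l' = 0" using sq by auto
    show ?thesis using that unfolding G_def
    proof (elim UnE)
      assume a: "g \<in> L" "g' \<in> L" then show ?thesis using lz by auto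
    next
      assume "g \<in> L" "g' \<in> {m l y |l y. l \<in> L \<and> y \<in> R}"
      then show ?thesis using lz by (auto simp: massoc[symmetric])
    next
      assume "g \<in> {m l y |l y. l \<in> L \<and> y \<in> R}" "g' \<in> L"
      then show ?thesis using lz cl by (auto simp: massoc)
    next
      assume "g \<in> {m l y |l y. l \<in> L \<and> y \<in> R}" "g' \<in> {m l y |l y. l \<in> L \<and> y \<in> R}"
      then obtain l y l' y' where "g = m l y" "g' = m l' y'" "l \<in> L" "y \<in> R" "l' \<in> L" "y' \<in> R" by auto
      then show ?thesis using lz cl
        by (simp add: massoc) (metis m0l massoc)
    qed
  qed
  have g1: "m g w = 0" if "g \<in> G" "w \<in> span G" for g w
    using that(2) by (induct rule: span_induct_alt) (auto simp: msimps gg that(1))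
  have g2: "m u w = 0" if "u \<in> span G" "w \<in> span G" for u w
    using that(1) by (induct rule: span_induct_alt) (auto simp: msimps g1 that(2))
  have "span G \<subseteq> {0}"
    by (rule SZ) (use subspace_span sR c1 g2 in auto)
  then show ?thesis using span_superset[of G] unfolding G_def by auto
qed

lemma img_subspace:
  assumes sL: "subspace L" and h0: "h 0 = 0" and ha: "\<And>a b. h (a + b) = h a + h b"
    and hs: "\<And>c a. h (scale c a) = scale c (h a)"
  shows "subspace (h ` L)"
proof -
  have z: "0 \<in> L" and a: "\<And>a b. a \<in> L \<Longrightarrow> b \<in> L \<Longrightarrow> a + b \<in> L"
    and c: "\<And>c a. a \<in> L \<Longrightarrow> scale c a \<in> L"
    using sL unfolding subspace_def by auto
  show ?thesis unfolding subspace_def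
  proof (intro conjI ballI allI)
    show "0 \<in> h ` L" using image_eqI[of 0 h 0 L] z h0 by simp
    fix x y assume "x \<in> h ` L" "y \<in> h ` L"
    then obtain a' b' where ab: "a' \<in> L" "b' \<in> L" "x = h a'" "y = h b'" by auto
    then show "x + y \<in> h ` L" using image_eqI[of "x + y" h "a' + b'" L] a[of a' b'] ha[of a' b'] by simp
  next
    fix c' x assume "x \<in> h ` L"
    then obtain a' where "a' \<in> L" "x = h a'" by auto
    then show "scale c' x \<in> h ` L" using image_eqI[of "scale c' x" h "scale c' a'" L] c[of a' c'] hs[of c' a'] by simp
  qed
qed

lemma idem_ex:
  assumes "lideal L" "\<not> L \<subseteq> {0}"
  shows "\<exists>e\<in>L. e \<noteq> 0 \<and> m e e = e"
  using assms
proof (induct "dim L" arbitrary: L rule: less_induct)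
  case less
  show ?case
  proof (cases "\<exists>L'. lideal L' \<and> \<not> L' \<subseteq> {0} \<and> L' \<subseteq> L \<and> dim L' < dim L")
    case True
    then obtain L' where "lideal L'" "\<not> L' \<subseteq> {0}" "L' \<subseteq> L" "dim L' < dim L" by auto
    then show ?thesis using less(1)[of L'] by blast
  next
    case False
    have sL: "subspace L" and LR: "L \<subseteq> R" and cl: "\<And>r x. r \<in> R \<Longrightarrow> x \<in> L \<Longrightarrow> m r x \<in> L"
      using less(2) unfolding lideal_def by auto
    have mini: "L' = L" if "lideal L'" "\<not> L' \<subseteq> {0}" "L' \<subseteq> L" for L'
    proof -
      have "\<not> dim L' < dim L" using False that by blast
      then show ?thesis using that subspace_dim_equal[of L' L] sL unfolding lideal_def by simp
    qed
    obtain x y where xy: "x \<in> L" "y \<in> L" "m y x \<noteq> 0"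
      using SZL[OF less(2)] less(3) by blast
    have x0: "x \<noteq> 0" using xy by auto
    define Lx where "Lx = (\<lambda>z. m z x) ` L"
    have "lideal Lx" unfolding lideal_def Lx_def
    proof (intro conjI)
      show "subspace ((\<lambda>z. m z x) ` L)" by (rule img_subspace[OF sL]) (auto simp: msimps)
      show "(\<lambda>z. m z x) ` L \<subseteq> R" using cl LR xy by auto
      show "\<forall>r\<in>R. \<forall>xa\<in>(\<lambda>z. m z x) ` L. m r xa \<in> (\<lambda>z. m z x) ` L"
        using cl by (auto simp: massoc[symmetric])
    qed
    moreover have "\<not> Lx \<subseteq> {0}" using xy unfolding Lx_def by auto
    moreover have "Lx \<subseteq> L" unfolding Lx_def using cl LR xy by auto
    ultimately have "Lx = L" using mini by blast
    then obtain e where e: "e \<in> L" "m e x = x" using xy(1) unfolding Lx_def by force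
    define K where "K = {z \<in> L. m z x = 0}"
    have "lideal K" unfolding lideal_def K_def
    proof (intro conjI)
      show "subspace {z \<in> L. m z x = 0}" using sL unfolding subspace_def by (auto simp: msimps)
    qed (use LR cl in \<open>auto simp: massoc\<close>)
    moreover have "K \<noteq> L"
    proof
      assume "K = L"
      then have "e \<in> K" using e by simp
      then show False using e x0 unfolding K_def by simp
    qed
    ultimately have "K \<subseteq> {0}" using mini[of K] unfolding K_def by auto
    moreover have "m e e - e \<in> K" unfolding K_def
      using e cl LR subspace_diff[OF sL] by (auto simp: msimps massoc)
    ultimately have "m e e = e" by auto
    moreover have "e \<noteq> 0" using e x0 by auto
    ultimately show ?thesis using e by auto
  qed
qed

definition "ideal M \<longleftrightarrow> subspace M \<and> M \<subseteq> R \<and> (\<forall>r\<in>R. \<forall>x\<in>M. m r x \<in> M \<and> m x r \<in> M)"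

lemma right_unit:
  assumes "ideal M"
  shows "\<exists>e\<in>M. \<forall>x\<in>M. m x e = x"
proof -
  have sM: "subspace M" and MR: "M \<subseteq> R" and cl: "\<And>r x. r \<in> R \<Longrightarrow> x \<in> M \<Longrightarrow> m r x \<in> M \<and> m x r \<in> M"
    using assms unfolding ideal_def by auto
  define D where "D e = (\<lambda>r. m r e) ` R" for e
  have sD: "subspace (D e)" for e
    unfolding D_def by (rule img_subspace[OF Rsub]) (auto simp: msimps)
  define S where "S = (\<lambda>e. dim (D e)) ` {e \<in> M. m e e = e}"
  have "S \<subseteq> {..dimension}"
  proof
    fix k assume "k \<in> S"
    then obtain e' where "k = dim (D e')" unfolding S_def by (rule imageE) simp
    then show "k \<in> {..dimension}" using dim_subset_UNIV[of "D e'"] by simp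
  qed
  then have finS: "finite S" using finite_subset by blast
  have "0 \<in> {e \<in> M. m e e = e}" using subspace_0[OF sM] by auto
  then have "S \<noteq> {}" unfolding S_def by auto
  then have "Max S \<in> S" using Max_in[OF finS] by blast
  then obtain e where e0: "e \<in> {e \<in> M. m e e = e}" "Max S = dim (D e)"
    unfolding S_def by (rule imageE)
  then have e: "e \<in> M" "m e e = e" "dim (D e) = Max S" by auto
  have emax: "dim (D g) \<le> dim (D e)" if "g \<in> M" "m g g = g" for g
  proof -
    have "g \<in> {e \<in> M. m e e = e}" using that by simp
    then have "dim (D g) \<in> S" unfolding S_def by (rule imageI)
    then show ?thesis using Max_ge[OF finS] e(3) by simp
  qed
  show ?thesis
  proof (rule bexI[OF _ e(1)], rule ccontr)
    assume "\<not> (\<forall>x\<in>M. m x e = x)"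
    then obtain x0 where x0: "x0 \<in> M" "m x0 e \<noteq> x0" by auto
    define L' where "L' = (\<lambda>x. x - m x e) ` M"
    have "lideal L'" unfolding lideal_def L'_def
    proof (intro conjI)
      show "subspace ((\<lambda>x. x - m x e) ` M)" by (rule img_subspace[OF sM]) (auto simp: msimps scale_right_diff_distrib)
      show "(\<lambda>x. x - m x e) ` M \<subseteq> R"
      proof
        fix z assume "z \<in> (\<lambda>x. x - m x e) ` M"
        then obtain xa where "xa \<in> M" "z = xa - m xa e" by auto
        moreover have "m xa e \<in> M" using cl MR e(1) \<open>xa \<in> M\<close> by blast
        ultimately show "z \<in> R" using MR subspace_diff[OF Rsub] by blast
      qed
      show "\<forall>r\<in>R. \<forall>xa\<in>(\<lambda>x. x - m x e) ` M. m r xa \<in> (\<lambda>x. x - m x e) ` M"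
        using cl by (auto simp: msimps massoc[symmetric])
    qed
    moreover have "\<not> L' \<subseteq> {0}" using x0 unfolding L'_def by force
    ultimately obtain f where f: "f \<in> L'" "f \<noteq> 0" "m f f = f" using idem_ex by blast
    then obtain x where x: "x \<in> M" "f = x - m x e" unfolding L'_def by auto
    have fe: "m f e = 0" using x e by (simp add: msimps massoc)
    have fM: "f \<in> M" using x cl[of e x] e MR subspace_diff[OF sM] by auto
    have fR: "f \<in> R" using fM MR by auto
    define g where "g = e + f - m e f"
    have gM: "g \<in> M" unfolding g_def using fM e cl[of e f] MR subspace_add[OF sM] subspace_diff[OF sM] by auto
    have a1: "m e (m e f) = m e f" using e by (simp add: massoc[symmetric])
    have a2: "m f (m e f) = 0" using fe by (simp add: massoc[symmetric])
    have a3: "m (m e f) e = 0" using fe by (simp add: massoc)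
    have a4: "m (m e f) f = m e f" using f by (simp add: massoc)
    have a5: "m (m e f) (m e f) = 0" using a2 by (simp add: massoc)
    have gg: "m g g = g" unfolding g_def using e f fe a1 a2 a3 a4 a5 by (simp add: msimps)
    have eg: "m e g = e" unfolding g_def using e a1 by (simp add: msimps)
    have fg: "m f g = f" unfolding g_def using f fe a2 by (simp add: msimps)
    have "D e \<subseteq> D g"
    proof
      fix z assume "z \<in> D e"
      then obtain r where r: "r \<in> R" "z = m r e" unfolding D_def by auto
      then have "z = m (m r e) g" using eg by (simp add: massoc)
      moreover have "m r e \<in> R" using r e MR Rcl by auto
      ultimately show "z \<in> D g" unfolding D_def by auto
    qed
    moreover have "f \<in> D g" unfolding D_def using fg fR by force
    moreover have "f \<notin> D e"
    proof
      assume "f \<in> D e"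
      then obtain r where "f = m r e" unfolding D_def by auto
      then have "m f e = f" using e by (simp add: massoc)
      then show False using fe f by auto
    qed
    ultimately have "D e \<subset> D g" by auto
    then have "dim (D e) < dim (D g)"
      using dim_psubset[of "D e" "D g"] span_eq_iff[of "D e"] span_eq_iff[of "D g"] sD by metis
    then show False using emax[OF gM gg] by auto
  qed
qed

lemma two_unit:
  assumes "ideal M"
  shows "\<exists>e\<in>M. \<forall>x\<in>M. m x e = x \<and> m e x = x"
proof -
  interpret fl: RA scale Bas "\<lambda>x y. m y x" R
  proof (unfold_locales)
    fix I assume "subspace I" "I \<subseteq> R" "\<forall>r\<in>R. \<forall>x\<in>I. m x r \<in> I \<and> m r x \<in> I"
      "\<forall>x\<in>I. \<forall>y\<in>I. m y x = 0"
    then show "I \<subseteq> {0}" using SZ[of I] by blast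
  qed (auto simp: msimps massoc Rsub Rcl)
  have "fl.ideal M" using assms unfolding ideal_def fl.ideal_def by blast
  then obtain e' where e': "e' \<in> M" "\<forall>x\<in>M. m e' x = x" using fl.right_unit by blast
  obtain e where e: "e \<in> M" "\<forall>x\<in>M. m x e = x" using right_unit[OF assms] by blast
  have "e = e'" using e e' by metis
  then show ?thesis using e e' by blast
qed

lemma central_decomp:
  assumes "ideal M"
  obtains e where "e \<in> M" "\<And>x. x \<in> M \<Longrightarrow> m x e = x" "\<And>x. x \<in> M \<Longrightarrow> m e x = x"
    "\<And>r. r \<in> R \<Longrightarrow> m e r = m r e" "\<And>r. r \<in> R \<Longrightarrow> m e r \<in> M"
    "\<And>r y. r \<in> R \<Longrightarrow> y \<in> M \<Longrightarrow> m (r - m e r) y = 0 \<and> m y (r - m e r) = 0"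
proof -
  have MR: "M \<subseteq> R" and cl: "\<And>r x. r \<in> R \<Longrightarrow> x \<in> M \<Longrightarrow> m r x \<in> M \<and> m x r \<in> M"
    using assms unfolding ideal_def by auto
  obtain e where e: "e \<in> M" "\<forall>x\<in>M. m x e = x \<and> m e x = x" using two_unit[OF assms] by blast
  have comm: "m e r = m r e" if "r \<in> R" for r
  proof -
    have "m (m e r) e = m e r" using e cl[OF that e(1)] by auto
    moreover have "m e (m r e) = m r e" using e cl[OF that e(1)] by auto
    ultimately show ?thesis by (simp add: massoc)
  qed
  show ?thesis
  proof (rule that[OF e(1)])
    show "\<And>x. x \<in> M \<Longrightarrow> m x e = x" "\<And>x. x \<in> M \<Longrightarrow> m e x = x" using e by auto
    show "\<And>r. r \<in> R \<Longrightarrow> m e r = m r e" by (rule comm)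
    show "\<And>r. r \<in> R \<Longrightarrow> m e r \<in> M" using cl e by auto
    fix r y assume r: "r \<in> R" and y: "y \<in> M"
    have "m r y \<in> M" "m y r \<in> M" using cl r y by auto
    then have "m e (m r y) = m r y" "m (m y r) e = m y r" using e by auto
    moreover have "m y e = y" "m e y = y" using e y by auto
    ultimately show "m (r - m e r) y = 0 \<and> m y (r - m e r) = 0"
      using comm[OF r] by (simp add: msimps massoc)
  qed
qed

end


locale SA = finite_dimensional_vector_space scale Bas
  for scale :: "'k::field \<Rightarrow> 'v::ab_group_add \<Rightarrow> 'v" and Bas :: "'v set" +
  fixes mul :: "'v \<Rightarrow> 'v \<Rightarrow> 'v" and A0 A1 :: "'v set" and B :: "'v \<Rightarrow> 'v \<Rightarrow> 'k"
  assumes madd1: "mul (x + y) z = mul x z + mul y z"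
    and madd2: "mul z (x + y) = mul z x + mul z y"
    and msc1: "mul (scale c x) y = scale c (mul x y)"
    and msc2: "mul x (scale c y) = scale c (mul x y)"
    and massoc: "mul (mul x y) z = mul x (mul y z)"
    and sub0: "subspace A0" and sub1: "subspace A1" and int01: "A0 \<inter> A1 = {0}"
    and dec: "\<exists>x\<in>A0. \<exists>y\<in>A1. v = x + y"
    and g00: "x \<in> A0 \<Longrightarrow> y \<in> A0 \<Longrightarrow> mul x y \<in> A0"
    and g01: "x \<in> A0 \<Longrightarrow> y \<in> A1 \<Longrightarrow> mul x y \<in> A1"
    and g10: "x \<in> A1 \<Longrightarrow> y \<in> A0 \<Longrightarrow> mul x y \<in> A1"
    and g11: "x \<in> A1 \<Longrightarrow> y \<in> A1 \<Longrightarrow> mul x y \<in> A0"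
    and Badd1: "B (x + y) z = B x z + B y z"
    and Badd2: "B z (x + y) = B z x + B z y"
    and Bsc1: "B (scale c x) y = c * B x y"
    and Bsc2: "B x (scale c y) = c * B x y"
    and B00: "x \<in> A0 \<Longrightarrow> y \<in> A0 \<Longrightarrow> B x y = 0"
    and B11: "x \<in> A1 \<Longrightarrow> y \<in> A1 \<Longrightarrow> B x y = 0"
    and Bsym01: "x \<in> A0 \<Longrightarrow> y \<in> A1 \<Longrightarrow> B x y = B y x"
    and Bassoc: "B (mul x y) z = B x (mul y z)"
    and Bnd: "(\<forall>y. B x y = 0) \<Longrightarrow> x = 0"
    and irr: "graded_ideal scale mul A0 A1 I \<Longrightarrow> (\<forall>x\<in>I. (\<forall>y\<in>I. B x y = 0) \<longrightarrow> x = 0)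
               \<Longrightarrow> I = {0} \<or> I = UNIV"
    and univ: "(UNIV :: 'v set) \<noteq> {0}"
    and nonsimple: "\<not> simple_superalgebra scale mul A0 A1"
    and semis: "semisimple_alg scale A0 mul"
begin

sublocale r: RA scale Bas mul A0
proof (unfold_locales)
  fix I assume I: "subspace I" "I \<subseteq> A0" "\<forall>r\<in>A0. \<forall>x\<in>I. mul r x \<in> I \<and> mul x r \<in> I"
    "\<forall>x\<in>I. \<forall>y\<in>I. mul x y = 0"
  have "alg_ideal scale A0 mul I" unfolding alg_ideal_def using I by auto
  moreover have "nilpotent_set mul I" unfolding nilpotent_set_def
  proof (intro exI[of _ 2] conjI allI impI)
    fix x xs assume a: "x \<in> I \<and> set xs \<subseteq> I \<and> Suc (length xs) = 2"
    then obtain y where "xs = [y]" by (cases xs) auto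
    then show "lprod mul x xs = 0" using a I(4) by simp
  qed simp
  ultimately show "I \<subseteq> {0}" using semis unfolding semisimple_alg_def by blast
qed (auto simp: madd1 madd2 msc1 msc2 massoc sub0 g00)

lemmas msimps = r.msimps

lemma B0l[simp]: "B 0 y = 0" using Bsc1[of 0 0 y] by simp
lemma B0r[simp]: "B y 0 = 0" using Bsc2[of y 0 0] by simp
lemma Bneg1: "B (- x) y = - B x y" using Badd1[of x "-x" y] by (simp add: eq_neg_iff_add_eq_0 add.commute)
lemma Bneg2: "B y (- x) = - B y x" using Badd2[of y x "-x"] by (simp add: eq_neg_iff_add_eq_0 add.commute)
lemma Bdiff1: "B (x - y) z = B x z - B y z" using Badd1[of x "-y" z] Bneg1 by simp
lemma Bdiff2: "B z (x - y) = B z x - B z y" using Badd2[of z x "-y"] Bneg2 by simp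
lemmas Bsimps = Badd1 Badd2 Bsc1 Bsc2 Bdiff1 Bdiff2 Bneg1 Bneg2

lemma Bsym: "B u w = B w u"
proof -
  obtain u0 u1 where u: "u0 \<in> A0" "u1 \<in> A1" "u = u0 + u1" using dec by blast
  obtain w0 w1 where w: "w0 \<in> A0" "w1 \<in> A1" "w = w0 + w1" using dec by blast
  have "B u w = B u0 w1 + B u1 w0" using u w by (simp add: Bsimps B00 B11)
  moreover have "B w u = B w0 u1 + B w1 u0" using u w by (simp add: Bsimps B00 B11)
  ultimately show ?thesis using u w Bsym01 by (simp add: add.commute)
qed

lemma z0: "0 \<in> A0" and z1: "0 \<in> A1" using sub0 sub1 subspace_0 by auto
lemma add0: "x \<in> A0 \<Longrightarrow> y \<in> A0 \<Longrightarrow> x + y \<in> A0" using sub0 subspace_add by auto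
lemma add1: "x \<in> A1 \<Longrightarrow> y \<in> A1 \<Longrightarrow> x + y \<in> A1" using sub1 subspace_add by auto
lemma diff0: "x \<in> A0 \<Longrightarrow> y \<in> A0 \<Longrightarrow> x - y \<in> A0" using sub0 subspace_diff by auto
lemma diff1: "x \<in> A1 \<Longrightarrow> y \<in> A1 \<Longrightarrow> x - y \<in> A1" using sub1 subspace_diff by auto
lemma sc0: "x \<in> A0 \<Longrightarrow> scale c x \<in> A0" using sub0 subspace_scale by auto
lemma sc1: "x \<in> A1 \<Longrightarrow> scale c x \<in> A1" using sub1 subspace_scale by auto
lemma both0: "x \<in> A0 \<Longrightarrow> x \<in> A1 \<Longrightarrow> x = 0" using int01 by auto

lemma nd0: assumes "x \<in> A0" "\<And>a. a \<in> A1 \<Longrightarrow> B x a = 0" shows "x = 0"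
proof (rule Bnd, rule allI)
  fix y obtain y0 y1 where "y0 \<in> A0" "y1 \<in> A1" "y = y0 + y1" using dec by blast
  then show "B x y = 0" using assms B00 by (simp add: Bsimps)
qed

lemma nd1: assumes "a \<in> A1" "\<And>x. x \<in> A0 \<Longrightarrow> B x a = 0" shows "a = 0"
proof (rule Bnd, rule allI)
  fix y obtain y0 y1 where "y0 \<in> A0" "y1 \<in> A1" "y = y0 + y1" using dec by blast
  then show "B a y = 0" using assms(2)[of y0] Bsym[of a y0] B11[of a y1] assms(1) by (simp add: Bsimps)
qed

lemma A0_nonzero: "\<not> A0 \<subseteq> {0}"
proof
  assume h: "A0 \<subseteq> {0}"
  have "v = 0" for v :: 'v
  proof -
    obtain x y where "x \<in> A0" "y \<in> A1" "v = x + y" using dec by blast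
    then have v1: "v \<in> A1" using h by auto
    show ?thesis
    proof (rule Bnd, rule allI)
      fix w obtain x' y' where "x' \<in> A0" "y' \<in> A1" "w = x' + y'" using dec by blast
      then show "B v w = 0" using h v1 B11 by (auto simp: Bsimps)
    qed
  qed
  then show False using univ by auto
qed

definition "T = {t \<in> A1. \<forall>a\<in>A1. mul a t = 0 \<and> mul t a = 0}"

lemma T_nonzero: "\<exists>t\<in>T. t \<noteq> 0"
proof -
  have ns: "\<not> ((\<exists>x y. mul x y \<noteq> 0) \<and> (\<forall>I. graded_ideal scale mul A0 A1 I \<longrightarrow> I = {0} \<or> I = UNIV))"
    using nonsimple unfolding simple_superalgebra_def .
  have "\<exists>x y. mul x y \<noteq> 0"
  proof (rule ccontr)
    assume "\<not> (\<exists>x y. mul x y \<noteq> 0)"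
    then have mz: "\<And>x y. mul x y = 0" by auto
    have "A0 \<subseteq> {0}" by (rule r.SZ[OF sub0 order_refl]) (simp_all add: mz z0)
    then show False using A0_nonzero by auto
  qed
  with ns have "\<not> (\<forall>I. graded_ideal scale mul A0 A1 I \<longrightarrow> I = {0} \<or> I = UNIV)" by simp
  then obtain I where I: "graded_ideal scale mul A0 A1 I" "I \<noteq> {0}" "I \<noteq> UNIV" by auto
  have sI: "subspace I" and grI: "\<forall>x\<in>I. \<exists>a\<in>I \<inter> A0. \<exists>b\<in>I \<inter> A1. x = a + b"
    and clI: "\<And>a x. x \<in> I \<Longrightarrow> mul a x \<in> I \<and> mul x a \<in> I"
    using I(1) unfolding graded_ideal_def by auto
  define P where "P = {v. \<forall>w\<in>I. B v w = 0}"
  define Rd where "Rd = I \<inter> P"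
  have "\<not> (\<forall>x\<in>I. (\<forall>y\<in>I. B x y = 0) \<longrightarrow> x = 0)" using irr[OF I(1)] I(2,3) by auto
  then obtain x0 where x0: "x0 \<in> I" "\<forall>y\<in>I. B x0 y = 0" "x0 \<noteq> 0" by auto
  have x0R: "x0 \<in> Rd" using x0 unfolding Rd_def P_def by auto
  have RI: "Rd \<subseteq> I" unfolding Rd_def by auto
  have iso: "\<And>x y. x \<in> Rd \<Longrightarrow> y \<in> I \<Longrightarrow> B x y = 0" unfolding Rd_def P_def by auto
  have Rid: "mul u x \<in> Rd \<and> mul x u \<in> Rd" if "x \<in> Rd" for u x
  proof -
    have "B (mul u x) w = 0" if "w \<in> I" for w
    proof -
      have "B (mul u x) w = B (mul w u) x" using Bsym Bassoc by metis
      also have "\<dots> = 0" using iso[OF \<open>x \<in> Rd\<close>, of "mul w u"] clI[OF that] Bsym by metis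
      finally show ?thesis .
    qed
    moreover have "B (mul x u) w = 0" if "w \<in> I" for w
      using Bassoc iso[OF \<open>x \<in> Rd\<close>, of "mul u w"] clI[OF that] by metis
    ultimately show ?thesis using clI[of x u] RI that unfolding Rd_def P_def by auto
  qed
  have Rsq: "mul x y = 0" if "x \<in> Rd" "y \<in> Rd" for x y
  proof (rule Bnd, rule allI)
    fix v show "B (mul x y) v = 0" using Bassoc iso[OF that(1)] Rid[OF that(2)] RI by (metis subsetD)
  qed
  have sP: "subspace P" unfolding P_def subspace_def by (auto simp: Bsimps)
  have sR: "subspace Rd" unfolding Rd_def using sI sP subspace_inter by blast
  have R0: "Rd \<inter> A0 \<subseteq> {0}"
  proof (rule r.SZ)
    show "subspace (Rd \<inter> A0)" using sR sub0 subspace_inter by blast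
    show "\<forall>r\<in>A0. \<forall>x\<in>Rd \<inter> A0. mul r x \<in> Rd \<inter> A0 \<and> mul x r \<in> Rd \<inter> A0"
      using Rid g00 by auto
    show "\<forall>x\<in>Rd \<inter> A0. \<forall>y\<in>Rd \<inter> A0. mul x y = 0" using Rsq by auto
  qed auto
  have Rgr: "\<exists>a\<in>Rd \<inter> A0. \<exists>b\<in>Rd \<inter> A1. x = a + b" if xR: "x \<in> Rd" for x
  proof -
    have "x \<in> I" using xR RI by auto
    then have "\<exists>a\<in>I \<inter> A0. \<exists>b\<in>I \<inter> A1. x = a + b" using grI by simp
    then obtain a b where ab: "a \<in> I" "a \<in> A0" "b \<in> I" "b \<in> A1" "x = a + b" by auto
    have ob: "B a w = 0 \<and> B b w = 0" if wI: "w \<in> I" for w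
    proof -
      have "\<exists>a\<in>I \<inter> A0. \<exists>b\<in>I \<inter> A1. w = a + b" using grI wI by simp
      then obtain w0 w1 where w: "w0 \<in> I" "w0 \<in> A0" "w1 \<in> I" "w1 \<in> A1" "w = w0 + w1" by auto
      have e0: "B x w0 = 0" "B x w1 = 0" using iso[OF xR] w(1,3) by auto
      have z: "B a w0 = 0" "B b w1 = 0" using ab(2,4) w(2,4) B00 B11 by auto
      have "B b w0 = 0" using e0(1) z(1) unfolding ab(5) Badd1 by simp
      moreover have "B a w1 = 0" using e0(2) z(2) unfolding ab(5) Badd1 by simp
      ultimately show ?thesis using z unfolding w(5) Badd2 by simp
    qed
    have "a \<in> P" "b \<in> P" using ob unfolding P_def by auto
    then have "a \<in> Rd" "b \<in> Rd" using ab unfolding Rd_def by auto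
    then show ?thesis using ab by blast
  qed
  obtain a b where ab: "a \<in> Rd \<inter> A0" "b \<in> Rd \<inter> A1" "x0 = a + b" using Rgr[OF x0R] by blast
  have "a = 0" using R0 ab by auto
  then have "x0 = b" using ab by simp
  have "x0 \<in> T" unfolding T_def
  proof (intro CollectI conjI ballI)
    show "x0 \<in> A1" using ab \<open>x0 = b\<close> by auto
    fix a' assume "a' \<in> A1"
    then have "mul a' x0 \<in> Rd \<inter> A0" "mul x0 a' \<in> Rd \<inter> A0" using Rid[OF x0R] g11 \<open>x0 \<in> A1\<close> by auto
    then show "mul a' x0 = 0" "mul x0 a' = 0" using R0 by auto
  qed
  then show ?thesis using x0 by blast
qed

lemma subspace_sum:
  assumes "subspace U" "subspace W"
  shows "subspace {u + w | u w. u \<in> U \<and> w \<in> W}"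
proof -
  have zu: "0 \<in> U" and au: "\<And>a b. a \<in> U \<Longrightarrow> b \<in> U \<Longrightarrow> a + b \<in> U" and su: "\<And>c a. a \<in> U \<Longrightarrow> scale c a \<in> U"
    using assms(1) unfolding subspace_def by auto
  have zw: "0 \<in> W" and aw: "\<And>a b. a \<in> W \<Longrightarrow> b \<in> W \<Longrightarrow> a + b \<in> W" and sw: "\<And>c a. a \<in> W \<Longrightarrow> scale c a \<in> W"
    using assms(2) unfolding subspace_def by auto
  show ?thesis unfolding subspace_def
  proof (intro conjI ballI allI)
    show "0 \<in> {u + w |u w. u \<in> U \<and> w \<in> W}" using zu zw by force
    fix x y assume "x \<in> {u + w |u w. u \<in> U \<and> w \<in> W}" "y \<in> {u + w |u w. u \<in> U \<and> w \<in> W}"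
    then obtain u w u' w' where h: "u \<in> U" "w \<in> W" "x = u + w" "u' \<in> U" "w' \<in> W" "y = u' + w'" by blast
    have "x + y = (u + u') + (w + w')" using h by (simp add: algebra_simps)
    then show "x + y \<in> {u + w |u w. u \<in> U \<and> w \<in> W}" using au[OF h(1,4)] aw[OF h(2,5)] by blast
  next
    fix c x assume "x \<in> {u + w |u w. u \<in> U \<and> w \<in> W}"
    then obtain u w where h: "u \<in> U" "w \<in> W" "x = u + w" by blast
    have "scale c x = scale c u + scale c w" using h by (simp add: scale_right_distrib)
    then show "scale c x \<in> {u + w |u w. u \<in> U \<and> w \<in> W}" using su[OF h(1)] sw[OF h(2)] by blast
  qed
qed

lemma T_sub: "T \<subseteq> A1" unfolding T_def by auto

lemma T_mod: assumes "x \<in> A0" "t \<in> T" shows "mul x t \<in> T" "mul t x \<in> T"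
proof -
  have t: "t \<in> A1" "\<And>a. a \<in> A1 \<Longrightarrow> mul a t = 0 \<and> mul t a = 0" using assms(2) unfolding T_def by auto
  show "mul x t \<in> T" unfolding T_def
  proof (intro CollectI conjI ballI)
    show "mul x t \<in> A1" using g01 assms(1) t(1) .
    fix a assume a: "a \<in> A1"
    have "mul a x \<in> A1" using g10 a assms(1) .
    then show "mul a (mul x t) = 0" using t(2) by (simp add: massoc[symmetric])
    show "mul (mul x t) a = 0" using t(2)[OF a] by (simp add: massoc)
  qed
  show "mul t x \<in> T" unfolding T_def
  proof (intro CollectI conjI ballI)
    show "mul t x \<in> A1" using g10 t(1) assms(1) .
    fix a assume a: "a \<in> A1"
    have "mul x a \<in> A1" using g01 assms(1) a .
    then show "mul (mul t x) a = 0" using t(2) by (simp add: massoc)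
    show "mul a (mul t x) = 0" using t(2)[OF a] by (simp add: massoc[symmetric])
  qed
qed

lemma P1: assumes "a \<in> A1" "b \<in> A1" shows "mul a b = 0"
proof -
  define M where "M = {x \<in> A0. \<forall>t\<in>T. B x t = 0}"
  have MA: "M \<subseteq> A0" unfolding M_def by auto
  have sM: "subspace M" unfolding M_def subspace_def
    using z0 add0 sc0 by (auto simp: Bsimps)
  have A11M: "mul a' b' \<in> M" if "a' \<in> A1" "b' \<in> A1" for a' b'
    unfolding M_def
  proof (intro CollectI conjI ballI)
    show "mul a' b' \<in> A0" using g11 that .
    fix t assume "t \<in> T"
    then have "mul b' t = 0" using that(2) unfolding T_def by auto
    then show "B (mul a' b') t = 0" by (simp add: Bassoc)
  qed
  have idM: "r.ideal M" unfolding r.ideal_def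
  proof (intro conjI ballI)
    show "subspace M" "M \<subseteq> A0" using sM MA by auto
    fix r x assume r: "r \<in> A0" and x: "x \<in> M"
    have x0: "x \<in> A0" "\<And>t. t \<in> T \<Longrightarrow> B x t = 0" using x unfolding M_def by auto
    show "mul r x \<in> M" unfolding M_def
    proof (intro CollectI conjI ballI)
      show "mul r x \<in> A0" using g00 r x0(1) .
      fix t assume t: "t \<in> T"
      have "B (mul r x) t = B (mul t r) x" using Bsym Bassoc by metis
      also have "\<dots> = 0" using x0(2)[OF T_mod(2)[OF r t]] Bsym by metis
      finally show "B (mul r x) t = 0" .
    qed
    show "mul x r \<in> M" unfolding M_def
    proof (intro CollectI conjI ballI)
      show "mul x r \<in> A0" using g00 x0(1) r .
      fix t assume t: "t \<in> T"
      show "B (mul x r) t = 0" using x0(2)[OF T_mod(1)[OF r t]] by (simp add: Bassoc)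
    qed
  qed
  obtain e where e: "e \<in> M" "\<And>x. x \<in> M \<Longrightarrow> mul x e = x" "\<And>x. x \<in> M \<Longrightarrow> mul e x = x"
    "\<And>r. r \<in> A0 \<Longrightarrow> mul e r = mul r e" "\<And>r. r \<in> A0 \<Longrightarrow> mul e r \<in> M"
    "\<And>r y. r \<in> A0 \<Longrightarrow> y \<in> M \<Longrightarrow> mul (r - mul e r) y = 0 \<and> mul y (r - mul e r) = 0"
    using r.central_decomp[OF idM] by blast
  define N where "N = {c \<in> A0. \<forall>y\<in>M. mul c y = 0 \<and> mul y c = 0}"
  have NA: "N \<subseteq> A0" unfolding N_def by auto
  have sN: "subspace N" unfolding N_def subspace_def
    using z0 add0 sc0 by (auto simp: msimps)
  have Nid: "mul x c \<in> N \<and> mul c x \<in> N" if "x \<in> A0" "c \<in> N" for x c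
  proof -
    have c: "c \<in> A0" "\<And>y. y \<in> M \<Longrightarrow> mul c y = 0 \<and> mul y c = 0" using that(2) unfolding N_def by auto
    have my: "mul y x \<in> M" "mul x y \<in> M" if "y \<in> M" for y
      using idM that \<open>x \<in> A0\<close> unfolding r.ideal_def by auto
    have "mul (mul x c) y = 0 \<and> mul y (mul x c) = 0" if "y \<in> M" for y
      using c(2)[OF that] c(2)[OF my(1)[OF that]] massoc[of x c y] massoc[of y x c] by simp
    moreover have "mul (mul c x) y = 0 \<and> mul y (mul c x) = 0" if "y \<in> M" for y
      using c(2)[OF my(2)[OF that]] c(2)[OF that] massoc[of c x y] massoc[of y c x] by simp
    ultimately show ?thesis unfolding N_def using g00 c(1) that(1) by auto
  qed
  have NT: "mul a' c \<in> T \<and> mul c a' \<in> T" if a': "a' \<in> A1" and c: "c \<in> N" for a' c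
  proof -
    have cA: "c \<in> A0" and cM: "\<And>y. y \<in> M \<Longrightarrow> mul c y = 0 \<and> mul y c = 0" using c unfolding N_def by auto
    have "mul a' c \<in> T" unfolding T_def
    proof (intro CollectI conjI ballI)
      show "mul a' c \<in> A1" using g10 a' cA .
      fix b' assume b': "b' \<in> A1"
      show "mul b' (mul a' c) = 0" using cM[OF A11M[OF b' a']] by (simp add: massoc[symmetric])
      show "mul (mul a' c) b' = 0"
      proof (rule nd0)
        show "mul (mul a' c) b' \<in> A0" using g11 g10 a' cA b' by blast
        fix d assume d: "d \<in> A1"
        show "B (mul (mul a' c) b') d = 0" using cM[OF A11M[OF b' d]] by (simp add: Bassoc)
      qed
    qed
    moreover have "mul c a' \<in> T" unfolding T_def
    proof (intro CollectI conjI ballI)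
      show "mul c a' \<in> A1" using g01 cA a' .
      fix b' assume b': "b' \<in> A1"
      show "mul (mul c a') b' = 0" using cM[OF A11M[OF a' b']] by (simp add: massoc)
      show "mul b' (mul c a') = 0"
      proof (rule nd0)
        show "mul b' (mul c a') \<in> A0" using g11 g01 a' cA b' by blast
        fix d assume d: "d \<in> A1"
        have "B (mul b' (mul c a')) d = B b' (mul c (mul a' d))" by (simp add: Bassoc massoc[symmetric])
        then show "B (mul b' (mul c a')) d = 0" using cM[OF A11M[OF a' d]] by simp
      qed
    qed
    ultimately show ?thesis by simp
  qed
  define G where "G = {c + t | c t. c \<in> N \<and> t \<in> T}"
  have sT: "subspace T" unfolding T_def subspace_def using z1 add1 sc1 by (auto simp: msimps)
  have sG: "subspace G" unfolding G_def by (rule subspace_sum[OF sN sT])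
  have mulG: "mul u v \<in> G \<and> mul v u \<in> G" if "v \<in> G" for u v
  proof -
    obtain c t where ct: "c \<in> N" "t \<in> T" "v = c + t" using \<open>v \<in> G\<close> unfolding G_def by blast
    obtain u0 u1 where u: "u0 \<in> A0" "u1 \<in> A1" "u = u0 + u1" using dec by blast
    have t1: "t \<in> A1" "\<And>a. a \<in> A1 \<Longrightarrow> mul a t = 0 \<and> mul t a = 0" using ct(2) unfolding T_def by auto
    have "mul u v = mul u0 c + (mul u1 c + mul u0 t)" using u ct t1(2)[OF u(2)] by (simp add: msimps)
    moreover have "mul u1 c + mul u0 t \<in> T"
      using NT[OF u(2) ct(1)] T_mod[OF u(1) ct(2)] sT subspace_add by blast
    moreover have "mul u0 c \<in> N" using Nid[OF u(1) ct(1)] by simp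
    ultimately have 1: "mul u v \<in> G" unfolding G_def by blast
    have "mul v u = mul c u0 + (mul c u1 + mul t u0)" using u ct t1(2)[OF u(2)] by (simp add: msimps)
    moreover have "mul c u1 + mul t u0 \<in> T"
      using NT[OF u(2) ct(1)] T_mod[OF u(1) ct(2)] sT subspace_add by blast
    moreover have "mul c u0 \<in> N" using Nid[OF u(1) ct(1)] by simp
    ultimately have 2: "mul v u \<in> G" unfolding G_def by blast
    show ?thesis using 1 2 by simp
  qed
  have z0N: "0 \<in> N" and z0T: "0 \<in> T" using sN sT subspace_0 by auto
  have NG: "N \<subseteq> G" unfolding G_def using z0T by force
  have TG: "T \<subseteq> G" unfolding G_def using z0N by force
  have grG: "graded_ideal scale mul A0 A1 G" unfolding graded_ideal_def
  proof (intro conjI ballI allI)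
    show "subspace G" by (rule sG)
    fix x assume "x \<in> G"
    then obtain c t where ct: "c \<in> N" "t \<in> T" "x = c + t" unfolding G_def by blast
    then show "\<exists>a\<in>G \<inter> A0. \<exists>b\<in>G \<inter> A1. x = a + b" using NG TG NA T_sub by blast
  next
    fix a' x assume "x \<in> G" then show "mul a' x \<in> G" "mul x a' \<in> G" using mulG by blast+
  qed
  have ndG: "\<forall>x\<in>G. (\<forall>y\<in>G. B x y = 0) \<longrightarrow> x = 0"
  proof (intro ballI impI)
    fix v assume vG: "v \<in> G" and vo: "\<forall>y\<in>G. B v y = 0"
    obtain c t where ct: "c \<in> N" "t \<in> T" "v = c + t" using vG unfolding G_def by blast
    have cA: "c \<in> A0" and cM: "\<And>y. y \<in> M \<Longrightarrow> mul c y = 0 \<and> mul y c = 0" using ct(1) unfolding N_def by auto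
    have tA: "t \<in> A1" using ct(2) T_sub by auto
    have "B c w = 0" if "w \<in> T" for w
    proof -
      have "B v w = 0" using vo TG that by auto
      moreover have "B t w = 0" using B11 tA T_sub that by auto
      ultimately show ?thesis using ct(3) by (simp add: Badd1)
    qed
    then have "c \<in> M" unfolding M_def using cA by auto
    then have "c = mul c e" using e(2) by simp
    also have "\<dots> = 0" using cM[OF e(1)] by simp
    finally have c0: "c = 0" .
    have "t = 0"
    proof (rule nd1[OF tA])
      fix x assume x: "x \<in> A0"
      have ex: "mul e x \<in> M" "x - mul e x \<in> N"
        using e(5)[OF x] e(6)[OF x] diff0[OF x g00[OF MA[THEN subsetD, OF e(1)] x]] unfolding N_def by auto
      have "B (mul e x) t = 0" using ex(1) ct(2) unfolding M_def by auto
      moreover have "B t (x - mul e x) = 0" using vo NG ex(2) ct(3) c0 by auto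
      ultimately have "B x t = B (mul e x) t + B (x - mul e x) t" by (simp add: Bsimps)
      then show "B x t = 0" using \<open>B t (x - mul e x) = 0\<close> \<open>B (mul e x) t = 0\<close> Bsym[of t "x - mul e x"] by simp
    qed
    then show "v = 0" using c0 ct(3) by simp
  qed
  obtain t0 where t0: "t0 \<in> T" "t0 \<noteq> 0" using T_nonzero by blast
  have "G \<noteq> {0}" using TG t0 by auto
  then have GU: "G = UNIV" using irr[OF grG ndG] by auto
  have "a \<in> T"
  proof -
    have "a \<in> G" using GU by simp
    then obtain c t where ct: "c \<in> N" "t \<in> T" "a = c + t" unfolding G_def by blast
    have "c = a - t" using ct(3) by simp
    then have "c \<in> A1" using diff1[OF assms(1)] ct(2) T_sub by auto
    then have "c = 0" using both0 ct(1) NA by auto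
    then show ?thesis using ct by simp
  qed
  then show ?thesis using assms(2) unfolding T_def by auto
qed

lemma P2: assumes J: "alg_ideal scale A0 mul J" shows "J = {0} \<or> J = A0"
proof (cases "J = {0}")
  case True then show ?thesis by simp
next
  case False
  then have Jn: "J \<noteq> {0}" .
  have sJ: "subspace J" and JA: "J \<subseteq> A0" and clJ: "\<And>r x. r \<in> A0 \<Longrightarrow> x \<in> J \<Longrightarrow> mul r x \<in> J \<and> mul x r \<in> J"
    using J unfolding alg_ideal_def by auto
  have idJ: "r.ideal J" unfolding r.ideal_def using sJ JA clJ by blast
  obtain e where e: "e \<in> J" "\<And>x. x \<in> J \<Longrightarrow> mul x e = x" "\<And>x. x \<in> J \<Longrightarrow> mul e x = x"
    "\<And>r. r \<in> A0 \<Longrightarrow> mul e r = mul r e" "\<And>r. r \<in> A0 \<Longrightarrow> mul e r \<in> J"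
    "\<And>r y. r \<in> A0 \<Longrightarrow> y \<in> J \<Longrightarrow> mul (r - mul e r) y = 0 \<and> mul y (r - mul e r) = 0"
    using r.central_decomp[OF idJ] by blast
  define N where "N = {c \<in> A0. \<forall>y\<in>J. mul c y = 0 \<and> mul y c = 0}"
  define P where "P = {a \<in> A1. \<forall>c\<in>N. B c a = 0}"
  have PA: "P \<subseteq> A1" unfolding P_def by auto
  have sP: "subspace P" unfolding P_def subspace_def using z1 add1 sc1 by (auto simp: Bsimps)
  have Nid: "mul x c \<in> N \<and> mul c x \<in> N" if "x \<in> A0" "c \<in> N" for x c
  proof -
    have c: "c \<in> A0" "\<And>y. y \<in> J \<Longrightarrow> mul c y = 0 \<and> mul y c = 0" using that(2) unfolding N_def by auto
    have my: "mul y x \<in> J" "mul x y \<in> J" if "y \<in> J" for y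
      using clJ that \<open>x \<in> A0\<close> by auto
    have "mul (mul x c) y = 0 \<and> mul y (mul x c) = 0" if "y \<in> J" for y
      using c(2)[OF that] c(2)[OF my(1)[OF that]] massoc[of x c y] massoc[of y x c] by simp
    moreover have "mul (mul c x) y = 0 \<and> mul y (mul c x) = 0" if "y \<in> J" for y
      using c(2)[OF my(2)[OF that]] c(2)[OF that] massoc[of c x y] massoc[of y c x] by simp
    ultimately show ?thesis unfolding N_def using g00 c(1) that(1) by auto
  qed
  have JP: "mul a j \<in> P \<and> mul j a \<in> P" if a: "a \<in> A1" and j: "j \<in> J" for a j
  proof -
    have jA: "j \<in> A0" using j JA by auto
    have "B c (mul a j) = 0" if c: "c \<in> N" for c
    proof -
      have "mul j c = 0" using c j unfolding N_def by auto
      have "B c (mul a j) = B (mul c a) j" by (simp add: Bassoc)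
      also have "\<dots> = B j (mul c a)" by (rule Bsym)
      also have "\<dots> = B (mul j c) a" by (simp add: Bassoc)
      finally show ?thesis using \<open>mul j c = 0\<close> by simp
    qed
    moreover have "B c (mul j a) = 0" if c: "c \<in> N" for c
    proof -
      have "mul c j = 0" using c j unfolding N_def by auto
      then show ?thesis by (simp add: Bassoc[symmetric])
    qed
    ultimately show ?thesis unfolding P_def using g10[OF a jA] g01[OF jA a] by auto
  qed
  have PP: "mul x p \<in> P \<and> mul p x \<in> P" if x: "x \<in> A0" and p: "p \<in> P" for x p
  proof -
    have pA: "p \<in> A1" and pc: "\<And>c. c \<in> N \<Longrightarrow> B c p = 0" using p unfolding P_def by auto
    have "B c (mul x p) = 0" if c: "c \<in> N" for c
    proof -
      have "B c (mul x p) = B (mul c x) p" by (simp add: Bassoc)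
      then show ?thesis using pc Nid[OF x c] by simp
    qed
    moreover have "B c (mul p x) = 0" if c: "c \<in> N" for c
    proof -
      have "B c (mul p x) = B (mul p x) c" by (rule Bsym)
      also have "\<dots> = B p (mul x c)" by (simp add: Bassoc)
      also have "\<dots> = B (mul x c) p" by (rule Bsym)
      finally show ?thesis using pc Nid[OF x c] by simp
    qed
    ultimately show ?thesis unfolding P_def using g01[OF x pA] g10[OF pA x] by auto
  qed
  define I where "I = {j + p | j p. j \<in> J \<and> p \<in> P}"
  have sI: "subspace I" unfolding I_def by (rule subspace_sum[OF sJ sP])
  have z0J: "0 \<in> J" and z0P: "0 \<in> P" using sJ sP subspace_0 by auto
  have JI: "J \<subseteq> I" unfolding I_def using z0P by force
  have PI: "P \<subseteq> I" unfolding I_def using z0J by force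
  have mulI: "mul u v \<in> I \<and> mul v u \<in> I" if "v \<in> I" for u v
  proof -
    obtain j p where jp: "j \<in> J" "p \<in> P" "v = j + p" using \<open>v \<in> I\<close> unfolding I_def by blast
    obtain u0 u1 where u: "u0 \<in> A0" "u1 \<in> A1" "u = u0 + u1" using dec by blast
    have pA: "p \<in> A1" using jp PA by auto
    have "mul u v = mul u0 j + (mul u1 j + mul u0 p)" using u jp P1[OF u(2) pA] by (simp add: msimps)
    moreover have "mul u1 j + mul u0 p \<in> P"
      using JP[OF u(2) jp(1)] PP[OF u(1) jp(2)] sP subspace_add by blast
    moreover have "mul u0 j \<in> J" using clJ[OF u(1) jp(1)] by simp
    ultimately have 1: "mul u v \<in> I" unfolding I_def by blast
    have "mul v u = mul j u0 + (mul j u1 + mul p u0)" using u jp P1[OF pA u(2)] by (simp add: msimps)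
    moreover have "mul j u1 + mul p u0 \<in> P"
      using JP[OF u(2) jp(1)] PP[OF u(1) jp(2)] sP subspace_add by blast
    moreover have "mul j u0 \<in> J" using clJ[OF u(1) jp(1)] by simp
    ultimately have 2: "mul v u \<in> I" unfolding I_def by blast
    show ?thesis using 1 2 by simp
  qed
  have grI: "graded_ideal scale mul A0 A1 I" unfolding graded_ideal_def
  proof (intro conjI ballI allI)
    show "subspace I" by (rule sI)
    fix x assume "x \<in> I"
    then obtain j p where "j \<in> J" "p \<in> P" "x = j + p" unfolding I_def by blast
    then show "\<exists>a\<in>I \<inter> A0. \<exists>b\<in>I \<inter> A1. x = a + b" using JI PI JA PA by blast
  next
    fix a' x assume "x \<in> I" then show "mul a' x \<in> I" "mul x a' \<in> I" using mulI by blast+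
  qed
  have ndI: "\<forall>x\<in>I. (\<forall>y\<in>I. B x y = 0) \<longrightarrow> x = 0"
  proof (intro ballI impI)
    fix v assume vI: "v \<in> I" and vo: "\<forall>y\<in>I. B v y = 0"
    obtain j p where jp: "j \<in> J" "p \<in> P" "v = j + p" using vI unfolding I_def by blast
    have jA: "j \<in> A0" and pA: "p \<in> A1" using jp JA PA by auto
    have p0: "p = 0"
    proof (rule nd1[OF pA])
      fix x assume x: "x \<in> A0"
      have ej: "mul e x \<in> J" using e(5)[OF x] .
      have nx: "x - mul e x \<in> N" unfolding N_def using e(6)[OF x] diff0[OF x g00[OF JA[THEN subsetD, OF e(1)] x]] by auto
      have "B v (mul e x) = 0" using vo JI ej by auto
      moreover have "B j (mul e x) = 0" using B00 jA ej JA by auto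
      ultimately have "B p (mul e x) = 0" using jp(3) by (simp add: Badd1)
      moreover have "B (x - mul e x) p = 0" using jp(2) nx unfolding P_def by auto
      ultimately show "B x p = 0" using Bsym[of p "mul e x"] by (simp add: Bdiff1)
    qed
    have "j = 0"
    proof (rule nd0[OF jA])
      fix a assume a: "a \<in> A1"
      have "mul e a \<in> P" unfolding P_def
      proof (intro CollectI conjI ballI)
        show "mul e a \<in> A1" using g01 JA e(1) a by blast
        fix c assume "c \<in> N"
        then have "mul c e = 0" using e(1) unfolding N_def by auto
        then show "B c (mul e a) = 0" by (simp add: Bassoc[symmetric])
      qed
      then have "B v (mul e a) = 0" using vo PI by auto
      then have "B j (mul e a) = 0" using jp(3) p0 by simp
      then show "B j a = 0" using e(2)[OF jp(1)] by (simp add: Bassoc[symmetric])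
    qed
    then show "v = 0" using p0 jp(3) by simp
  qed
  have "I \<noteq> {0}" using Jn JI z0J by blast
  then have IU: "I = UNIV" using irr[OF grI ndI] by auto
  show ?thesis
  proof (intro disjI2 equalityI)
    show "J \<subseteq> A0" by (rule JA)
    show "A0 \<subseteq> J"
    proof
      fix x assume x: "x \<in> A0"
      have "x \<in> I" using IU by simp
      then obtain j p where jp: "j \<in> J" "p \<in> P" "x = j + p" unfolding I_def by blast
      have "p = x - j" using jp(3) by simp
      then have "p \<in> A0" using diff0[OF x] jp(1) JA by auto
      then have "p = 0" using both0 jp(2) PA by auto
      then show "x \<in> J" using jp by simp
    qed
  qed
qed

lemma A0_prod: "\<exists>x\<in>A0. \<exists>y\<in>A0. mul x y \<noteq> 0"
proof -
  have "r.ideal A0" unfolding r.ideal_def using sub0 g00 by auto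
  then obtain e where e: "e \<in> A0" "\<And>x. x \<in> A0 \<Longrightarrow> mul x e = x"
    using r.two_unit by blast
  obtain x where "x \<in> A0" "x \<noteq> 0" using A0_nonzero by auto
  then show ?thesis using e by metis
qed

lemma vs: "vector_space scale" by intro_locales

lemma pair_dim:
  fixes P :: "'v \<Rightarrow> 'v \<Rightarrow> 'k"
  assumes sS: "subspace S" and sT: "subspace U"
    and Pa1: "\<And>x y z. P (x + y) z = P x z + P y z" and Pa2: "\<And>x y z. P z (x + y) = P z x + P z y"
    and Ps1: "\<And>c x y. P (scale c x) y = c * P x y" and Ps2: "\<And>c x y. P x (scale c y) = c * P x y"
    and nd: "\<And>t. t \<in> U \<Longrightarrow> (\<And>s. s \<in> S \<Longrightarrow> P s t = 0) \<Longrightarrow> t = 0"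
  obtains bs \<theta> where "finite bs" "independent bs" "bs \<subseteq> S" "span bs = S" "card bs = dim S"
    "\<theta> = (\<lambda>t. \<Sum>b\<in>bs. scale (P b t) b)" "dim (\<theta> ` U) = dim U" "\<theta> ` U \<subseteq> S" "subspace (\<theta> ` U)"
    "dim U \<le> dim S"
proof -
  obtain bs where bs: "bs \<subseteq> S" "independent bs" "S \<subseteq> span bs" "card bs = dim S"
    using basis_exists[of S] by blast
  have fb: "finite bs" using finiteI_independent[OF bs(2)] .
  have spb: "span bs = S" using bs(3) span_minimal[OF bs(1) sS] by auto
  define \<theta> where "\<theta> = (\<lambda>t. \<Sum>b\<in>bs. scale (P b t) b)"
  have P0: "P s 0 = 0" for s using Ps2[of s 0 0] by simp
  have P0': "P 0 s = 0" for s using Ps1[of 0 0 s] by simp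
  have lin: "Vector_Spaces.linear scale scale \<theta>" unfolding Vector_Spaces.linear_iff
  proof (intro conjI allI)
    show "vector_space scale" by (rule vs)
    show "vector_space scale" by (rule vs)
    fix x y show "\<theta> (x + y) = \<theta> x + \<theta> y"
      unfolding \<theta>_def by (simp add: Pa2 scale_left_distrib sum.distrib)
  next
    fix c x show "\<theta> (scale c x) = scale c (\<theta> x)"
      unfolding \<theta>_def by (simp add: Ps2 scale_sum_right)
  qed
  have ext: "P s t = 0" if "s \<in> S" "\<And>b. b \<in> bs \<Longrightarrow> P b t = 0" for s t
  proof -
    have "s \<in> span bs" using that(1) spb by simp
    then show ?thesis
      by (induct rule: span_induct_alt) (simp_all add: P0' Pa1 Ps1 that(2))
  qed
  have th0: "t = 0" if "t \<in> U" "\<theta> t = 0" for t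
  proof (rule nd[OF that(1)])
    have ie: "\<forall>c. (\<Sum>v\<in>bs. scale (c v) v) = 0 \<longrightarrow> (\<forall>v\<in>bs. c v = 0)"
      using bs(2) unfolding independent_explicit by blast
    have "\<forall>b\<in>bs. P b t = 0" using ie[rule_format, of "\<lambda>b. P b t"] that(2) unfolding \<theta>_def by blast
    then show "\<And>s. s \<in> S \<Longrightarrow> P s t = 0" using ext by blast
  qed
  interpret lt: Vector_Spaces.linear scale scale \<theta> by (rule lin)
  have inj: "inj_on \<theta> (span U)"
  proof (rule inj_onI)
    fix x y assume "x \<in> span U" "y \<in> span U" "\<theta> x = \<theta> y"
    then have "x \<in> U" "y \<in> U" using sT by (simp_all add: span_eq_iff[THEN iffD2])
    then have "x - y \<in> U" "\<theta> (x - y) = 0" using sT subspace_diff lt.diff \<open>\<theta> x = \<theta> y\<close> by auto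
    then have "x - y = 0" using th0 by blast
    then show "x = y" by simp
  qed
  interpret fp: finite_dimensional_vector_space_pair_1 scale Bas scale by unfold_locales
  have d1: "dim (\<theta> ` U) = dim U" using fp.dim_image_eq[OF lin inj] .
  have sub: "\<theta> ` U \<subseteq> S"
  proof
    fix x assume "x \<in> \<theta> ` U"
    then obtain t where "x = \<theta> t" by auto
    moreover have "(\<Sum>b\<in>bs. scale (P b t) b) \<in> span bs"
      by (rule span_sum) (simp add: span_scale span_base)
    ultimately have "x \<in> span bs" unfolding \<theta>_def by simp
    then show "x \<in> S" using spb by simp
  qed
  have sth: "subspace (\<theta> ` U)"
    by (rule r.img_subspace[OF sT]) (simp_all add: lt.add lt.scale)
  have "dim U \<le> dim S" using d1 dim_subset[OF sub] by simp
  then show ?thesis using that[OF fb bs(2,1) spb bs(4) \<theta>_def d1 sub sth] by blast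
qed

lemma dual_surj:
  assumes fa: "\<forall>x\<in>A0. \<forall>y\<in>A0. f (x + y) = f x + f y" and fs: "\<forall>c. \<forall>x\<in>A0. f (scale c x) = c * f x"
  shows "\<exists>a\<in>A1. \<forall>z\<in>A0. B z a = f z"
proof -
  obtain bs \<theta> where bs: "finite bs" "independent bs" "bs \<subseteq> A0" "span bs = A0" "card bs = dim A0"
    and th: "\<theta> = (\<lambda>t. \<Sum>b\<in>bs. scale (B b t) b)" "dim (\<theta> ` A1) = dim A1" "\<theta> ` A1 \<subseteq> A0"
       "subspace (\<theta> ` A1)" "dim A1 \<le> dim A0"
    by (rule pair_dim[OF sub0 sub1 Badd1 Badd2 Bsc1 Bsc2 nd1])
  have "dim A0 \<le> dim A1"
  proof (rule pair_dim[OF sub1 sub0, of "\<lambda>x y. B y x"])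
    show "\<And>t. t \<in> A0 \<Longrightarrow> (\<And>s. s \<in> A1 \<Longrightarrow> B t s = 0) \<Longrightarrow> t = 0" by (rule nd0)
  qed (simp_all add: Badd1 Badd2 Bsc1 Bsc2)
  then have im: "\<theta> ` A1 = A0" using subspace_dim_equal[OF th(4) sub0 th(3)] th(2,5) by simp
  define x where "x = (\<Sum>b\<in>bs. scale (f b) b)"
  have "x \<in> span bs" unfolding x_def by (rule span_sum) (simp add: span_scale span_base)
  then have "x \<in> \<theta> ` A1" using bs(4) im by simp
  then obtain a where a: "a \<in> A1" "\<theta> a = x" by auto
  have "(\<Sum>b\<in>bs. scale (B b a - f b) b) = \<theta> a - x"
    unfolding th(1) x_def by (simp add: scale_left_diff_distrib sum_subtractf)
  also have "\<dots> = 0" using a by simp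
  finally have "(\<Sum>b\<in>bs. scale (B b a - f b) b) = 0" .
  moreover have ie: "\<forall>c. (\<Sum>v\<in>bs. scale (c v) v) = 0 \<longrightarrow> (\<forall>v\<in>bs. c v = 0)"
    using bs(2) unfolding independent_explicit by blast
  ultimately have bb: "\<And>b. b \<in> bs \<Longrightarrow> B b a = f b" using ie[rule_format, of "\<lambda>b. B b a - f b"] by auto
  have f0: "f 0 = 0" using fa z0 by (metis add.right_neutral add_left_cancel)
  have "z \<in> A0 \<and> B z a = f z" if "z \<in> span bs" for z
    using that
  proof (induct rule: span_induct_alt)
    case base then show ?case using z0 f0 by simp
  next
    case (step c x' y)
    have x': "x' \<in> A0" using step(1) bs(3) by auto
    have "scale c x' \<in> A0" using sc0[OF x'] .
    then have "f (scale c x' + y) = c * f x' + f y" using fa step(2) fs x' by simp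
    moreover have "scale c x' + y \<in> A0" using add0[OF sc0[OF x']] step(2) by auto
    ultimately show ?case using step(2) bb[OF step(1)] by (simp add: Bsimps)
  qed
  then show ?thesis using a(1) bs(4) by blast
qed

definition "p0 v = (SOME x. x \<in> A0 \<and> v - x \<in> A1)"
definition "p1 v = v - p0 v"
definition "psi a = (\<lambda>z. if z \<in> A0 then B z a else 0)"
definition "phi v = (p0 v, psi (p1 v))"

lemma p0p1: "p0 v \<in> A0" "p1 v \<in> A1" "v = p0 v + p1 v"
proof -
  obtain x y where "x \<in> A0" "y \<in> A1" "v = x + y" using dec by blast
  then have "\<exists>x. x \<in> A0 \<and> v - x \<in> A1" by (intro exI[of _ x]) simp
  then have "p0 v \<in> A0 \<and> v - p0 v \<in> A1" unfolding p0_def by (rule someI_ex)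
  then show "p0 v \<in> A0" "p1 v \<in> A1" "v = p0 v + p1 v" unfolding p1_def by auto
qed

lemma uniq: assumes "x \<in> A0" "y \<in> A1" "v = x + y" shows "p0 v = x" "p1 v = y"
proof -
  have "x - p0 v = p1 v - y" using p0p1(3)[of v] assms(3) by (simp add: algebra_simps)
  moreover have "x - p0 v \<in> A0" using diff0[OF assms(1) p0p1(1)] .
  moreover have "p1 v - y \<in> A1" using diff1[OF p0p1(2) assms(2)] .
  ultimately have "x - p0 v = 0" using both0 by metis
  then show "p0 v = x" by simp
  then show "p1 v = y" using p0p1(3)[of v] assms(3) by simp
qed

lemma p_add: "p0 (x + y) = p0 x + p0 y" "p1 (x + y) = p1 x + p1 y"
proof -
  have "x + y = (p0 x + p0 y) + (p1 x + p1 y)" using p0p1(3)[of x] p0p1(3)[of y] by (simp add: algebra_simps)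
  then show "p0 (x + y) = p0 x + p0 y" "p1 (x + y) = p1 x + p1 y"
    using uniq add0[OF p0p1(1) p0p1(1)] add1[OF p0p1(2) p0p1(2)] by blast+
qed

lemma p_sc: "p0 (scale c x) = scale c (p0 x)" "p1 (scale c x) = scale c (p1 x)"
proof -
  have "scale c x = scale c (p0 x) + scale c (p1 x)" using p0p1(3)[of x] by (metis scale_right_distrib)
  then show "p0 (scale c x) = scale c (p0 x)" "p1 (scale c x) = scale c (p1 x)"
    using uniq sc0[OF p0p1(1)] sc1[OF p0p1(2)] by blast+
qed

lemma p_mul: "p0 (mul x y) = mul (p0 x) (p0 y)" "p1 (mul x y) = mul (p0 x) (p1 y) + mul (p1 x) (p0 y)"
proof -
  have "mul x y = mul (p0 x + p1 x) (p0 y + p1 y)" using p0p1(3)[of x] p0p1(3)[of y] by simp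
  also have "\<dots> = mul (p0 x) (p0 y) + (mul (p0 x) (p1 y) + mul (p1 x) (p0 y))"
    using P1[OF p0p1(2) p0p1(2)] by (simp add: msimps algebra_simps)
  finally have e: "mul x y = mul (p0 x) (p0 y) + (mul (p0 x) (p1 y) + mul (p1 x) (p0 y))" .
  have a: "mul (p0 x) (p0 y) \<in> A0" using g00 p0p1(1) by blast
  have b: "mul (p0 x) (p1 y) + mul (p1 x) (p0 y) \<in> A1" using add1 g01 g10 p0p1(1,2) by blast
  show "p0 (mul x y) = mul (p0 x) (p0 y)" "p1 (mul x y) = mul (p0 x) (p1 y) + mul (p1 x) (p0 y)"
    using uniq[OF a b e] by blast+
qed

lemma psi_dual: "a \<in> A1 \<Longrightarrow> psi a \<in> dual_space scale A0"
  unfolding dual_space_def psi_def using add0 sc0 by (auto simp: Bsimps)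

lemma psi_inj: assumes "a \<in> A1" "b \<in> A1" "psi a = psi b" shows "a = b"
proof -
  have "a - b = 0"
  proof (rule nd1[OF diff1[OF assms(1,2)]])
    fix x assume "x \<in> A0"
    then have "B x a = B x b" using fun_cong[OF assms(3), of x] unfolding psi_def by simp
    then show "B x (a - b) = 0" by (simp add: Bsimps)
  qed
  then show ?thesis by simp
qed

lemma main:
  "simple_assoc_alg scale A0 mul \<and>
   bij_betw phi UNIV (A0 \<times> dual_space scale A0) \<and>
   (\<forall>x y. phi (x + y) = sd_add (phi x) (phi y)) \<and>
   (\<forall>c x. phi (scale c x) = sd_scale scale c (phi x)) \<and>
   (\<forall>x y. phi (mul x y) = sd_mul A0 mul (phi x) (phi y)) \<and>
   phi ` A0 = A0 \<times> {\<lambda>_. 0} \<and>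
   phi ` A1 = {0} \<times> dual_space scale A0"
proof (intro conjI allI)
  show "simple_assoc_alg scale A0 mul" unfolding simple_assoc_alg_def bilinear_on_def
    using sub0 g00 madd1 madd2 msc1 msc2 massoc A0_prod P2 by blast
  show "bij_betw phi UNIV (A0 \<times> dual_space scale A0)" unfolding bij_betw_def
  proof
    show "inj phi"
    proof (rule injI)
      fix x y assume "phi x = phi y"
      then have "p0 x = p0 y" "psi (p1 x) = psi (p1 y)" unfolding phi_def by auto
      then have "p0 x = p0 y" "p1 x = p1 y" using psi_inj p0p1(2) by auto
      then show "x = y" using p0p1(3)[of x] p0p1(3)[of y] by simp
    qed
    show "range phi = A0 \<times> dual_space scale A0"
    proof (rule equalityI)
      show "range phi \<subseteq> A0 \<times> dual_space scale A0" unfolding phi_def using p0p1 psi_dual by auto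
      show "A0 \<times> dual_space scale A0 \<subseteq> range phi"
      proof
        fix q assume "q \<in> A0 \<times> dual_space scale A0"
        then obtain x f where q: "q = (x, f)" "x \<in> A0" "f \<in> dual_space scale A0" by auto
        have fa: "\<forall>x\<in>A0. \<forall>y\<in>A0. f (x + y) = f x + f y" "\<forall>c. \<forall>x\<in>A0. f (scale c x) = c * f x"
          "\<And>z. z \<notin> A0 \<Longrightarrow> f z = 0"
          using q(3) unfolding dual_space_def by auto
        obtain a where a: "a \<in> A1" "\<forall>z\<in>A0. B z a = f z" using dual_surj[OF fa(1,2)] by blast
        have "psi a = f" unfolding psi_def using a fa(3) by auto
        moreover have "p0 (x + a) = x" "p1 (x + a) = a" using uniq[OF q(2) a(1)] by auto
        ultimately have "phi (x + a) = q" unfolding phi_def q by simp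
        then show "q \<in> range phi" by (metis rangeI)
      qed
    qed
  qed
next
  fix x y show "phi (x + y) = sd_add (phi x) (phi y)"
    unfolding phi_def sd_add_def psi_def by (auto simp: p_add Bsimps)
next
  fix c x show "phi (scale c x) = sd_scale scale c (phi x)"
    unfolding phi_def sd_scale_def psi_def by (auto simp: p_sc Bsimps)
next
  fix x y
  show "phi (mul x y) = sd_mul A0 mul (phi x) (phi y)"
  proof -
  have key: "psi (mul (p0 x) (p1 y) + mul (p1 x) (p0 y)) z =
      (if z \<in> A0 then psi (p1 y) (mul z (p0 x)) + psi (p1 x) (mul (p0 y) z) else 0)" for z
    proof (cases "z \<in> A0")
      case False then show ?thesis unfolding psi_def by simp
    next
      case True
      have zx: "mul z (p0 x) \<in> A0" "mul (p0 y) z \<in> A0" using g00 True p0p1(1) by blast+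
      have "B z (mul (p1 x) (p0 y)) = B (mul (p1 x) (p0 y)) z" by (rule Bsym)
      also have "\<dots> = B (p1 x) (mul (p0 y) z)" by (rule Bassoc)
      also have "\<dots> = B (mul (p0 y) z) (p1 x)" by (rule Bsym)
      finally have "B z (mul (p1 x) (p0 y)) = B (mul (p0 y) z) (p1 x)" .
      moreover have "B z (mul (p0 x) (p1 y)) = B (mul z (p0 x)) (p1 y)" by (simp add: Bassoc)
      ultimately show ?thesis unfolding psi_def using True zx by (simp add: Bsimps)
    qed
  then show ?thesis unfolding phi_def sd_mul_def by (simp add: p_mul fun_eq_iff)
  qed
next
  show "phi ` A0 = A0 \<times> {\<lambda>_. 0}"
  proof (rule equalityI)
    show "phi ` A0 \<subseteq> A0 \<times> {\<lambda>_. 0}"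
    proof
      fix q assume "q \<in> phi ` A0"
      then obtain x where x: "x \<in> A0" "q = phi x" by auto
      have "p0 x = x" "p1 x = 0" using uniq[OF x(1) z1] by auto
      then show "q \<in> A0 \<times> {\<lambda>_. 0}" using x unfolding phi_def psi_def by auto
    qed
    show "A0 \<times> {\<lambda>_. 0} \<subseteq> phi ` A0"
    proof
      fix q :: "'v \<times> ('v \<Rightarrow> 'k)" assume "q \<in> A0 \<times> {\<lambda>_. 0}"
      then obtain x where x: "x \<in> A0" "q = (x, \<lambda>_. 0)" by auto
      have "p0 x = x" "p1 x = 0" using uniq[OF x(1) z1] by auto
      then have "phi x = q" using x unfolding phi_def psi_def by auto
      then show "q \<in> phi ` A0" using x(1) by blast
    qed
  qed
next
  show "phi ` A1 = {0} \<times> dual_space scale A0"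
  proof (rule equalityI)
    show "phi ` A1 \<subseteq> {0} \<times> dual_space scale A0"
    proof
      fix q assume "q \<in> phi ` A1"
      then obtain a where a: "a \<in> A1" "q = phi a" by auto
      have "p0 a = 0" "p1 a = a" using uniq[OF z0 a(1)] by auto
      then show "q \<in> {0} \<times> dual_space scale A0" using a psi_dual unfolding phi_def by auto
    qed
    show "{0} \<times> dual_space scale A0 \<subseteq> phi ` A1"
    proof
      fix q :: "'v \<times> ('v \<Rightarrow> 'k)" assume "q \<in> {0} \<times> dual_space scale A0"
      then obtain f where q: "q = (0, f)" "f \<in> dual_space scale A0" by auto
      have fa: "\<forall>x\<in>A0. \<forall>y\<in>A0. f (x + y) = f x + f y" "\<forall>c. \<forall>x\<in>A0. f (scale c x) = c * f x"
        "\<And>z. z \<notin> A0 \<Longrightarrow> f z = 0"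
        using q(2) unfolding dual_space_def by auto
      obtain a where a: "a \<in> A1" "\<forall>z\<in>A0. B z a = f z" using dual_surj[OF fa(1,2)] by blast
      have "psi a = f" unfolding psi_def using a fa(3) by auto
      moreover have "p0 a = 0" "p1 a = a" using uniq[OF z0 a(1)] by auto
      ultimately have "phi a = q" unfolding phi_def q by simp
      then show "q \<in> phi ` A1" using a(1) by blast
    qed
  qed
qed

end

theorem mainTheorem9:
  fixes scale :: "'k::field_char_0 \<Rightarrow> 'v::ab_group_add \<Rightarrow> 'v"
    and mul :: "'v \<Rightarrow> 'v \<Rightarrow> 'v"
    and A0 A1 :: "'v set"
    and B :: "'v \<Rightarrow> 'v \<Rightarrow> 'k"
  assumes "alg_closed TYPE('k)"
    and "assoc_superalgebra scale mul A0 A1"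
    and "odd_symmetric_form scale mul A0 A1 B"
    and "B_irreducible scale mul A0 A1 B"
    and "\<not> simple_superalgebra scale mul A0 A1"
    and "semisimple_alg scale A0 mul"
  shows "\<exists>(S :: 'v set) (mS :: 'v \<Rightarrow> 'v \<Rightarrow> 'v) (\<phi> :: 'v \<Rightarrow> 'v \<times> ('v \<Rightarrow> 'k)).
           simple_assoc_alg scale S mS \<and>
           bij_betw \<phi> UNIV (S \<times> dual_space scale S) \<and>
           (\<forall>x y. \<phi> (x + y) = sd_add (\<phi> x) (\<phi> y)) \<and>
           (\<forall>c x. \<phi> (scale c x) = sd_scale scale c (\<phi> x)) \<and>
           (\<forall>x y. \<phi> (mul x y) = sd_mul S mS (\<phi> x) (\<phi> y)) \<and>
           \<phi> ` A0 = S \<times> {\<lambda>_. 0} \<and>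
           \<phi> ` A1 = {0} \<times> dual_space scale S"
proof -
  have fd: "fin_dim_vs scale" and AS: "assoc_superalgebra scale mul A0 A1" using assms(2) unfolding assoc_superalgebra_def by auto
  have vs: "vector_space scale" and fF: "\<exists>F. finite F \<and> module.span scale F = UNIV" using fd unfolding fin_dim_vs_def by auto
  interpret V: vector_space scale by (rule vs)
  obtain F where F: "finite F" "V.span F = UNIV" using fF by blast
  obtain Bas where Bas: "V.independent Bas" "UNIV \<subseteq> V.span Bas" using V.basis_exists[of UNIV] by blast
  have fB: "finite Bas" using V.independent_span_bound[OF F(1) Bas(1)] F(2) by auto
  have AS': "V.subspace A0" "V.subspace A1" "A0 \<inter> A1 = {0}" "\<forall>v. \<exists>x\<in>A0. \<exists>y\<in>A1. v = x + y"
     "bilinear_on scale UNIV mul" "\<forall>x y z. mul (mul x y) z = mul x (mul y z)"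
     "\<forall>x\<in>A0. \<forall>y\<in>A0. mul x y \<in> A0" "\<forall>x\<in>A0. \<forall>y\<in>A1. mul x y \<in> A1"
     "\<forall>x\<in>A1. \<forall>y\<in>A0. mul x y \<in> A1" "\<forall>x\<in>A1. \<forall>y\<in>A1. mul x y \<in> A0"
    using AS unfolding assoc_superalgebra_def by auto
  have bl: "\<And>x y z. mul (x + y) z = mul x z + mul y z" "\<And>x y z. mul z (x + y) = mul z x + mul z y"
    "\<And>c x y. mul (scale c x) y = scale c (mul x y)" "\<And>c x y. mul x (scale c y) = scale c (mul x y)"
    using AS'(5) unfolding bilinear_on_def by auto
  have OS: "\<forall>x y z. B (x + y) z = B x z + B y z \<and> B z (x + y) = B z x + B z y"
     "\<forall>c x y. B (scale c x) y = c * B x y \<and> B x (scale c y) = c * B x y"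
     "\<forall>x\<in>A0. \<forall>y\<in>A0. B x y = 0" "\<forall>x\<in>A1. \<forall>y\<in>A1. B x y = 0"
     "\<forall>x\<in>A0. \<forall>y\<in>A1. B x y = B y x"
     "\<forall>x y z. B (mul x y) z = B x (mul y z)" "\<forall>x. (\<forall>y. B x y = 0) \<longrightarrow> x = 0"
    using assms(3) unfolding odd_symmetric_form_def by auto
  have BI: "(UNIV :: 'v set) \<noteq> {0}"
    "\<And>I. graded_ideal scale mul A0 A1 I \<Longrightarrow> (\<forall>x\<in>I. (\<forall>y\<in>I. B x y = 0) \<longrightarrow> x = 0) \<Longrightarrow> I = {0} \<or> I = UNIV"
    using assms(4) unfolding B_irreducible_def by auto
  interpret SA scale Bas mul A0 A1 B
  proof (unfold_locales)
    show "finite Bas" by (rule fB)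
    show "V.independent Bas" by (rule Bas(1))
    show "V.span Bas = UNIV" using Bas(2) by auto
    show "B x y = B y x" if "x \<in> A0" "y \<in> A1" for x y
    proof -
      have "\<forall>y\<in>A1. B x y = B y x" using OS(5) that(1) by (rule bspec)
      then show ?thesis using that(2) by (rule bspec)
    qed
  qed (simp_all add: bl AS' OS BI assms(5,6))
  show ?thesis by (rule exI[of _ A0], rule exI[of _ mul], rule exI[of _ phi], rule main)
qed

end
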